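(* Let $1\to N\to G\xrightarrow{q}Q\to 1$ be a short exact sequence of groups, let $S$ be a generating set of $G$ and let $\mathcal{P}$ be a family of proper subgroups of $G$ such that every $P\in\mathcal{P}$ either contains $N$ or contains $S\setminus N$. Then $$\operatorname{CC}(G,\mathcal{P})\simeq\operatorname{CC}(Q,\overline{\mathcal{P}})\ast\operatorname{CC}(N,\mathcal{P}\cap N),$$ where $\overline{\mathcal{P}}=\{q(P): P\in\mathcal{P},\ N\subseteq P\}$ and $\mathcal{P}\cap N=\{P\cap N: P\in\mathcal{P},\ S\setminus N\subseteq P\}$.
   Context: For a group $G$ and a family $\mathcal{K}$ of subgroups, the coset complex $\operatorname{CC}(G,\mathcal{K})$ is the simplicial complex whose vertices are the cosets $gK$ ($g\in G$, $K\in\mathcal{K}$; cosets of different members of $\mathcal{K}$ are different vertices) and where a finite set of vertices spans a simplex iff the cosets have nonempty common intersection. Homotopy equivalence and the join $\ast$ refer to geometric realisations. *)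

theory Defs
  imports "HOL-Analysis.Analysis" "HOL-Algebra.Algebra"
begin

text \<open>Abstract simplicial complexes are given as sets of (finite, nonempty) simplices.\<close>

text \<open>Coset complex CC(G,K): vertices are pairs (K, gK) with K in the family, so that
  cosets of different members of the family are different vertices; a finite nonempty
  set of vertices is a simplex iff the cosets have nonempty common intersection.\<close>
definition coset_complex :: "('a, 'm) monoid_scheme \<Rightarrow> 'a set set \<Rightarrow> ('a set \<times> 'a set) set set" where
  "coset_complex G \<K> =
     {\<sigma>. finite \<sigma> \<and> \<sigma> \<noteq> {} \<and>
          \<sigma> \<subseteq> {(K, g <#\<^bsub>G\<^esub> K) | g K. g \<in> carrier G \<and> K \<in> \<K>} \<and>
          \<Inter> (snd ` \<sigma>) \<noteq> {}}"

definition simplicial_join :: "'u set set \<Rightarrow> 'v set set \<Rightarrow> ('u + 'v) set set" where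
  "simplicial_join K L =
     {s. s \<noteq> {} \<and> Inl -` s \<in> insert {} K \<and> Inr -` s \<in> insert {} L}"

text \<open>Geometric realisation: finitely supported barycentric coordinate functions whose
  support is a simplex, with the weak (coherent) topology w.r.t. the closed simplices,
  each carrying its standard Euclidean topology.\<close>
definition geom_points :: "'v set set \<Rightarrow> ('v \<Rightarrow> real) set" where
  "geom_points K = {f. (\<forall>v. 0 \<le> f v) \<and> {v. f v \<noteq> 0} \<in> K \<and> sum f {v. f v \<noteq> 0} = 1}"

definition closed_simplex :: "'v set \<Rightarrow> ('v \<Rightarrow> real) set" where
  "closed_simplex \<sigma> = {f. (\<forall>v. 0 \<le> f v) \<and> (\<forall>v. v \<notin> \<sigma> \<longrightarrow> f v = 0) \<and> sum f \<sigma> = 1}"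

definition geom_realisation :: "'v set set \<Rightarrow> ('v \<Rightarrow> real) topology" where
  "geom_realisation K = topology (\<lambda>U. U \<subseteq> geom_points K \<and>
      (\<forall>\<sigma>\<in>K. openin (subtopology (powertop_real UNIV) (closed_simplex \<sigma>)) (U \<inter> closed_simplex \<sigma>)))"

end

theory Submission
  imports Defs
begin


definition dclosed :: "'v set set \<Rightarrow> bool" where
  "dclosed K \<longleftrightarrow> (\<forall>\<sigma>\<in>K. \<forall>\<tau>. \<tau> \<subseteq> \<sigma> \<and> \<tau> \<noteq> {} \<longrightarrow> \<tau> \<in> K)"

lemma geom_istop:
  "istopology (\<lambda>U. U \<subseteq> geom_points K \<and>
      (\<forall>\<sigma>\<in>K. openin (subtopology (powertop_real UNIV) (closed_simplex \<sigma>)) (U \<inter> closed_simplex \<sigma>)))"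
  unfolding istopology_def
proof (rule conjI; intro allI impI)
  fix S T assume A: "S \<subseteq> geom_points K \<and> (\<forall>\<sigma>\<in>K. openin (subtopology (powertop_real UNIV) (closed_simplex \<sigma>)) (S \<inter> closed_simplex \<sigma>))"
    and B: "T \<subseteq> geom_points K \<and> (\<forall>\<sigma>\<in>K. openin (subtopology (powertop_real UNIV) (closed_simplex \<sigma>)) (T \<inter> closed_simplex \<sigma>))"
  show "S \<inter> T \<subseteq> geom_points K \<and> (\<forall>\<sigma>\<in>K. openin (subtopology (powertop_real UNIV) (closed_simplex \<sigma>)) (S \<inter> T \<inter> closed_simplex \<sigma>))"
  proof (intro conjI ballI)
    fix \<sigma> assume "\<sigma> \<in> K"
    have "S \<inter> T \<inter> closed_simplex \<sigma> = (S \<inter> closed_simplex \<sigma>) \<inter> (T \<inter> closed_simplex \<sigma>)" by blast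
    then show "openin (subtopology (powertop_real UNIV) (closed_simplex \<sigma>)) (S \<inter> T \<inter> closed_simplex \<sigma>)"
      using \<open>\<sigma> \<in> K\<close> A B by (simp add: openin_Int)
  qed (use A B in auto)
next
  fix \<K> :: "('a \<Rightarrow> real) set set"
  assume H: "\<forall>S\<in>\<K>. S \<subseteq> geom_points K \<and> (\<forall>\<sigma>\<in>K. openin (subtopology (powertop_real UNIV) (closed_simplex \<sigma>)) (S \<inter> closed_simplex \<sigma>))"
  show "\<Union>\<K> \<subseteq> geom_points K \<and> (\<forall>\<sigma>\<in>K. openin (subtopology (powertop_real UNIV) (closed_simplex \<sigma>)) (\<Union>\<K> \<inter> closed_simplex \<sigma>))"
  proof (intro conjI ballI)
    show "\<Union>\<K> \<subseteq> geom_points K" using H by blast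
  next
    fix \<sigma> assume "\<sigma> \<in> K"
    have "\<Union>\<K> \<inter> closed_simplex \<sigma> = \<Union>((\<lambda>S. S \<inter> closed_simplex \<sigma>) ` \<K>)" by blast
    moreover have "openin (subtopology (powertop_real UNIV) (closed_simplex \<sigma>)) (\<Union>((\<lambda>S. S \<inter> closed_simplex \<sigma>) ` \<K>))"
      using H \<open>\<sigma> \<in> K\<close> by (intro openin_Union) auto
    ultimately show "openin (subtopology (powertop_real UNIV) (closed_simplex \<sigma>)) (\<Union>\<K> \<inter> closed_simplex \<sigma>)"
      by simp
  qed
qed

lemma openin_geom:
  "openin (geom_realisation K) U \<longleftrightarrow> U \<subseteq> geom_points K \<and>
      (\<forall>\<sigma>\<in>K. openin (subtopology (powertop_real UNIV) (closed_simplex \<sigma>)) (U \<inter> closed_simplex \<sigma>))"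
  by (simp only: geom_realisation_def topology_inverse'[OF geom_istop])

lemma cs_supp:
  assumes "f \<in> closed_simplex \<sigma>"
  shows "{v. f v \<noteq> 0} \<subseteq> \<sigma>" "{v. f v \<noteq> 0} \<noteq> {}" "finite \<sigma>" "sum f {v. f v \<noteq> 0} = 1"
proof -
  show 1: "{v. f v \<noteq> 0} \<subseteq> \<sigma>" using assms unfolding closed_simplex_def by auto
  show 2: "finite \<sigma>"
  proof (rule ccontr)
    assume "infinite \<sigma>"
    then have "sum f \<sigma> = 0" by simp
    with assms show False unfolding closed_simplex_def by simp
  qed
  have "sum f {v. f v \<noteq> 0} = sum f \<sigma>"
    using 1 2 by (intro sum.mono_neutral_left) auto
  then show 3: "sum f {v. f v \<noteq> 0} = 1" using assms unfolding closed_simplex_def by auto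
  then show "{v. f v \<noteq> 0} \<noteq> {}" by (metis empty_iff mem_Collect_eq sum.neutral zero_neq_one)
qed

lemma gp_eq:
  assumes "dclosed K"
  shows "geom_points K = \<Union>(closed_simplex ` K)"
proof
  show "geom_points K \<subseteq> \<Union>(closed_simplex ` K)"
  proof
    fix f assume f: "f \<in> geom_points K"
    then have "f \<in> closed_simplex {v. f v \<noteq> 0}" unfolding geom_points_def closed_simplex_def by auto
    then show "f \<in> \<Union>(closed_simplex ` K)" using f unfolding geom_points_def by auto
  qed
next
  show "\<Union>(closed_simplex ` K) \<subseteq> geom_points K"
  proof
    fix f assume "f \<in> \<Union>(closed_simplex ` K)"
    then obtain \<sigma> where s: "\<sigma> \<in> K" "f \<in> closed_simplex \<sigma>" by auto
    have "{v. f v \<noteq> 0} \<in> K" using assms s cs_supp[OF s(2)] unfolding dclosed_def by blast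
    then show "f \<in> geom_points K" using s(2) cs_supp[OF s(2)] unfolding geom_points_def closed_simplex_def by auto
  qed
qed

lemma topspace_geom:
  assumes "dclosed K"
  shows "topspace (geom_realisation K) = geom_points K"
proof
  show "topspace (geom_realisation K) \<subseteq> geom_points K"
    unfolding topspace_def openin_geom by auto
next
  have "openin (geom_realisation K) (geom_points K)"
    unfolding openin_geom
  proof (intro conjI ballI)
    fix \<sigma> assume "\<sigma> \<in> K"
    then have "geom_points K \<inter> closed_simplex \<sigma> = topspace (subtopology (powertop_real UNIV) (closed_simplex \<sigma>))"
      using gp_eq[OF assms] by (auto simp: topspace_subtopology)
    then show "openin (subtopology (powertop_real UNIV) (closed_simplex \<sigma>)) (geom_points K \<inter> closed_simplex \<sigma>)"
      by (metis openin_topspace)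
  qed simp
  then show "geom_points K \<subseteq> topspace (geom_realisation K)"
    by (simp add: openin_subset)
qed

lemma simplicial_cont:
  assumes K: "dclosed K" and L: "dclosed L"
    and c: "continuous_map (powertop_real UNIV) (powertop_real UNIV) h"
    and s: "\<And>\<sigma>. \<sigma> \<in> K \<Longrightarrow> \<exists>\<tau>\<in>L. h ` closed_simplex \<sigma> \<subseteq> closed_simplex \<tau>"
  shows "continuous_map (geom_realisation K) (geom_realisation L) h"
  unfolding continuous_map_def
proof (intro conjI allI impI)
  show "h \<in> topspace (geom_realisation K) \<rightarrow> topspace (geom_realisation L)"
    unfolding topspace_geom[OF K] topspace_geom[OF L] gp_eq[OF K] gp_eq[OF L]
    using s by fastforce
next
  fix U assume U: "openin (geom_realisation L) U"
  show "openin (geom_realisation K) {x \<in> topspace (geom_realisation K). h x \<in> U}"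
    unfolding openin_geom
  proof (intro conjI ballI)
    show "{x \<in> topspace (geom_realisation K). h x \<in> U} \<subseteq> geom_points K"
      using topspace_geom[OF K] by auto
  next
    fix \<sigma> assume "\<sigma> \<in> K"
    then obtain \<tau> where t: "\<tau> \<in> L" "h ` closed_simplex \<sigma> \<subseteq> closed_simplex \<tau>" using s by blast
    have cm: "continuous_map (subtopology (powertop_real UNIV) (closed_simplex \<sigma>))
        (subtopology (powertop_real UNIV) (closed_simplex \<tau>)) h"
      using t(2) c by (auto simp: continuous_map_in_subtopology continuous_map_from_subtopology)
    have o: "openin (subtopology (powertop_real UNIV) (closed_simplex \<tau>)) (U \<inter> closed_simplex \<tau>)"
      using U t(1) unfolding openin_geom by blast
    have "{x \<in> topspace (geom_realisation K). h x \<in> U} \<inter> closed_simplex \<sigma> =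
        {x \<in> topspace (subtopology (powertop_real UNIV) (closed_simplex \<sigma>)). h x \<in> U \<inter> closed_simplex \<tau>}"
      using t(2) \<open>\<sigma> \<in> K\<close> unfolding topspace_geom[OF K] gp_eq[OF K] by auto
    then show "openin (subtopology (powertop_real UNIV) (closed_simplex \<sigma>))
        ({x \<in> topspace (geom_realisation K). h x \<in> U} \<inter> closed_simplex \<sigma>)"
      using openin_continuous_map_preimage[OF cm o] by simp
  qed
qed



lemma dclosed_image:
  assumes "dclosed K" "inj_on \<phi> (\<Union>K)"
  shows "dclosed ((`) \<phi> ` K)"
  unfolding dclosed_def
proof (intro ballI allI impI)
  fix s \<tau> assume s: "s \<in> (`) \<phi> ` K" and t: "\<tau> \<subseteq> s \<and> \<tau> \<noteq> {}"
  then obtain \<sigma> where \<sigma>: "\<sigma> \<in> K" "s = \<phi> ` \<sigma>" by auto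
  have ts: "\<tau> \<subseteq> \<phi> ` \<sigma>" using t \<sigma>(2) by simp
  then have e: "\<tau> = \<phi> ` (\<sigma> \<inter> \<phi> -` \<tau>)" by blast
  have ne: "\<sigma> \<inter> \<phi> -` \<tau> \<noteq> {}" using t ts by blast
  have all: "\<forall>\<tau>. \<tau> \<subseteq> \<sigma> \<and> \<tau> \<noteq> {} \<longrightarrow> \<tau> \<in> K" using assms(1) \<sigma>(1) unfolding dclosed_def by blast
  have "\<sigma> \<inter> \<phi> -` \<tau> \<in> K" using all[rule_format, OF conjI[OF Int_lower1 ne]] .
  with e show "\<tau> \<in> (`) \<phi> ` K" by (rule image_eqI)
qed

lemma simplicial_iso:
  assumes K: "dclosed K" and inj: "inj_on \<phi> (\<Union>K)"
  shows "geom_realisation K homeomorphic_space geom_realisation ((`) \<phi> ` K)"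
proof -
  define V where "V = \<Union>K"
  define L where "L = (`) \<phi> ` K"
  define F where "F = (\<lambda>(f::'a\<Rightarrow>real) w. if w \<in> \<phi> ` V then f (inv_into V \<phi> w) else 0)"
  define Gm where "Gm = (\<lambda>(g::'b\<Rightarrow>real) v. if v \<in> V then g (\<phi> v) else 0)"
  have injV: "inj_on \<phi> V" using inj V_def by simp
  have L: "dclosed L" unfolding L_def by (rule dclosed_image[OF K inj])
  have Fphi: "F f (\<phi> v) = f v" if "v \<in> V" for f v
    using that injV by (simp add: F_def inv_into_f_f)
  have Fs: "F ` closed_simplex \<sigma> \<subseteq> closed_simplex (\<phi> ` \<sigma>)" if "\<sigma> \<in> K" for \<sigma>
  proof
    fix h assume "h \<in> F ` closed_simplex \<sigma>"
    then obtain f where f: "f \<in> closed_simplex \<sigma>" "h = F f" by auto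
    have sV: "\<sigma> \<subseteq> V" using that V_def by auto
    have nn: "\<forall>v. 0 \<le> f v" and z: "\<forall>v. v \<notin> \<sigma> \<longrightarrow> f v = 0" and s1: "sum f \<sigma> = 1"
      using f(1) unfolding closed_simplex_def by auto
    have "\<forall>w. 0 \<le> F f w" using nn by (simp add: F_def)
    moreover have "\<forall>w. w \<notin> \<phi> ` \<sigma> \<longrightarrow> F f w = 0"
    proof (intro allI impI)
      fix w assume w: "w \<notin> \<phi> ` \<sigma>"
      show "F f w = 0"
      proof (cases "w \<in> \<phi> ` V")
        case True
        then obtain v where v: "v \<in> V" "w = \<phi> v" by auto
        then have "v \<notin> \<sigma>" using w by auto
        then show ?thesis using v Fphi z by simp
      next
        case False
        then show ?thesis by (simp add: F_def)
      qed
    qed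
    moreover have "sum (F f) (\<phi> ` \<sigma>) = 1"
    proof -
      have "sum (F f) (\<phi> ` \<sigma>) = sum (F f \<circ> \<phi>) \<sigma>"
        using inj_on_subset[OF injV sV] by (rule sum.reindex)
      also have "\<dots> = sum f \<sigma>" using sV Fphi by (intro sum.cong) auto
      finally show ?thesis using s1 by simp
    qed
    ultimately show "h \<in> closed_simplex (\<phi> ` \<sigma>)" using f(2) unfolding closed_simplex_def by auto
  qed
  have Gs: "Gm ` closed_simplex (\<phi> ` \<sigma>) \<subseteq> closed_simplex \<sigma>" if "\<sigma> \<in> K" for \<sigma>
  proof
    fix h assume "h \<in> Gm ` closed_simplex (\<phi> ` \<sigma>)"
    then obtain g where g: "g \<in> closed_simplex (\<phi> ` \<sigma>)" "h = Gm g" by auto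
    have sV: "\<sigma> \<subseteq> V" using that V_def by auto
    have nn: "\<forall>v. 0 \<le> g v" and z: "\<forall>v. v \<notin> \<phi> ` \<sigma> \<longrightarrow> g v = 0" and s1: "sum g (\<phi> ` \<sigma>) = 1"
      using g(1) unfolding closed_simplex_def by auto
    have "\<forall>w. 0 \<le> Gm g w" using nn by (simp add: Gm_def)
    moreover have "\<forall>v. v \<notin> \<sigma> \<longrightarrow> Gm g v = 0"
    proof (intro allI impI)
      fix v assume v: "v \<notin> \<sigma>"
      show "Gm g v = 0"
      proof (cases "v \<in> V")
        case True
        then have "\<phi> v \<notin> \<phi> ` \<sigma>" using v sV injV by (simp add: inj_on_image_mem_iff)
        then show ?thesis using z by (simp add: Gm_def)
      next
        case False
        then show ?thesis by (simp add: Gm_def)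
      qed
    qed
    moreover have "sum (Gm g) \<sigma> = 1"
    proof -
      have "sum g (\<phi> ` \<sigma>) = sum (g \<circ> \<phi>) \<sigma>"
        using inj_on_subset[OF injV sV] by (rule sum.reindex)
      also have "\<dots> = sum (Gm g) \<sigma>" using sV by (intro sum.cong) (auto simp: Gm_def)
      finally show ?thesis using s1 by simp
    qed
    ultimately show "h \<in> closed_simplex \<sigma>" using g(2) unfolding closed_simplex_def by auto
  qed
  have Fc: "continuous_map (powertop_real UNIV) (powertop_real UNIV) F"
    unfolding continuous_map_componentwise_UNIV
  proof
    fix w
    show "continuous_map (powertop_real UNIV) euclideanreal (\<lambda>x. F x w)"
      using continuous_map_product_projection[of "inv_into V \<phi> w" UNIV "\<lambda>i. euclideanreal"]
      by (cases "w \<in> \<phi> ` V") (simp_all add: F_def)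
  qed
  have Gc: "continuous_map (powertop_real UNIV) (powertop_real UNIV) Gm"
    unfolding continuous_map_componentwise_UNIV
  proof
    fix v
    show "continuous_map (powertop_real UNIV) euclideanreal (\<lambda>x. Gm x v)"
      using continuous_map_product_projection[of "\<phi> v" UNIV "\<lambda>i. euclideanreal"]
      by (cases "v \<in> V") (simp_all add: Gm_def)
  qed
  have cF: "continuous_map (geom_realisation K) (geom_realisation L) F"
    using K L Fc Fs unfolding L_def by (intro simplicial_cont) auto
  have cG: "continuous_map (geom_realisation L) (geom_realisation K) Gm"
    using K L Gc Gs unfolding L_def by (intro simplicial_cont) auto
  have GF: "Gm (F f) = f" if fT: "f \<in> topspace (geom_realisation K)" for f
  proof
    fix v
    obtain \<sigma> where s: "\<sigma> \<in> K" "f \<in> closed_simplex \<sigma>"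
      using fT unfolding topspace_geom[OF K] gp_eq[OF K] by auto
    show "Gm (F f) v = f v"
    proof (cases "v \<in> V")
      case True then show ?thesis by (simp add: Gm_def Fphi)
    next
      case False
      then have "v \<notin> \<sigma>" using s V_def by auto
      then show ?thesis using False s(2) unfolding closed_simplex_def by (simp add: Gm_def)
    qed
  qed
  have FG: "F (Gm g) = g" if gT: "g \<in> topspace (geom_realisation L)" for g
  proof
    fix w
    obtain \<tau> where "\<tau> \<in> L" "g \<in> closed_simplex \<tau>"
      using gT unfolding topspace_geom[OF L] gp_eq[OF L] by auto
    then obtain \<sigma> where s: "\<sigma> \<in> K" "g \<in> closed_simplex (\<phi> ` \<sigma>)"
      unfolding L_def by auto
    show "F (Gm g) w = g w"
    proof (cases "w \<in> \<phi> ` V")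
      case True
      then obtain v where v: "v \<in> V" "w = \<phi> v" by auto
      then show ?thesis by (simp add: Fphi Gm_def)
    next
      case False
      then have "w \<notin> \<phi> ` \<sigma>" using s V_def by auto
      then show ?thesis using False s(2) unfolding closed_simplex_def by (simp add: F_def)
    qed
  qed
  have "homeomorphic_maps (geom_realisation K) (geom_realisation L) F Gm"
    unfolding homeomorphic_maps_def using cF cG GF FG by blast
  then show ?thesis unfolding L_def by (rule homeomorphic_maps_imp_homeomorphic_space)
qed



locale cc_setup =
  fixes G :: "('a, 'm) monoid_scheme" and Q :: "('b, 'n) monoid_scheme"
    and q :: "'a \<Rightarrow> 'b" and N S :: "'a set" and PP :: "'a set set"
  assumes grpG: "group G" and grpQ: "group Q"
    and epi: "q \<in> epi G Q"
    and Nk: "N = kernel G Q q"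
    and SG: "S \<subseteq> carrier G" and gen: "generate G S = carrier G"
    and Psub: "\<And>P. P \<in> PP \<Longrightarrow> subgroup P G \<and> P \<noteq> carrier G"
    and Pdich: "\<And>P. P \<in> PP \<Longrightarrow> N \<subseteq> P \<or> S - N \<subseteq> P"
begin

sublocale G: group G by (rule grpG)
sublocale qh: group_hom G Q q
  using grpG grpQ epi unfolding group_hom_def group_hom_axioms_def epi_def by auto

definition Hs where "Hs = generate G (S - N)"

lemma surj: "q ` carrier G = carrier Q" using epi unfolding epi_def by auto

lemma N_sub: "subgroup N G" unfolding Nk by (rule qh.subgroup_kernel)
lemma N_normal: "N \<lhd> G" unfolding Nk by (rule qh.normal_kernel)
lemma N_carr: "N \<subseteq> carrier G" using N_sub subgroup.subset by blast
lemma N_mem: "x \<in> N \<longleftrightarrow> x \<in> carrier G \<and> q x = \<one>\<^bsub>Q\<^esub>" unfolding Nk kernel_def by auto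

lemma Hs_sub: "subgroup Hs G" unfolding Hs_def using SG by (intro G.generate_is_subgroup) auto

lemma decomp:
  assumes "x \<in> carrier G"
  obtains n h where "n \<in> N" "h \<in> Hs" "x = n \<otimes>\<^bsub>G\<^esub> h"
proof -
  interpret si: second_isomorphism_grp N G Hs
    using N_normal Hs_sub unfolding second_isomorphism_grp_def second_isomorphism_grp_axioms_def by auto
  have sm: "subgroup (N <#>\<^bsub>G\<^esub> Hs) G" by (rule si.normal_set_mult_subgroup)
  have "S \<subseteq> N <#>\<^bsub>G\<^esub> Hs"
  proof
    fix s assume s: "s \<in> S"
    show "s \<in> N <#>\<^bsub>G\<^esub> Hs"
    proof (cases "s \<in> N")
      case True
      then have "s = s \<otimes>\<^bsub>G\<^esub> \<one>\<^bsub>G\<^esub>" using s SG by auto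
      moreover have "\<one>\<^bsub>G\<^esub> \<in> Hs" using Hs_sub subgroup.one_closed by blast
      ultimately show ?thesis using True unfolding set_mult_def by blast
    next
      case False
      then have "s = \<one>\<^bsub>G\<^esub> \<otimes>\<^bsub>G\<^esub> s" using s SG by auto
      moreover have "s \<in> Hs" unfolding Hs_def using s False by (auto intro: generate.incl)
      moreover have "\<one>\<^bsub>G\<^esub> \<in> N" using N_sub subgroup.one_closed by blast
      ultimately show ?thesis unfolding set_mult_def by blast
    qed
  qed
  then have "generate G S \<subseteq> N <#>\<^bsub>G\<^esub> Hs" using sm by (rule G.generate_subgroup_incl)
  then have "x \<in> N <#>\<^bsub>G\<^esub> Hs" using gen assms by auto
  then show ?thesis using that unfolding set_mult_def by blast
qed

lemma Hs_le: "P \<in> PP \<Longrightarrow> S - N \<subseteq> P \<Longrightarrow> Hs \<subseteq> P"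
  unfolding Hs_def using Psub by (intro G.generate_subgroup_incl) auto

lemma notN: assumes "P \<in> PP" "S - N \<subseteq> P" shows "\<not> N \<subseteq> P"
proof
  assume "N \<subseteq> P"
  then have "S \<subseteq> P" using assms by auto
  then have "generate G S \<subseteq> P" using Psub[OF assms(1)] by (intro G.generate_subgroup_incl) auto
  then show False using gen Psub[OF assms(1)] subgroup.subset by blast
qed

definition sat :: "'a set \<Rightarrow> bool" where
  "sat A \<longleftrightarrow> A \<subseteq> carrier G \<and> (\<forall>a\<in>A. \<forall>n\<in>N. a \<otimes>\<^bsub>G\<^esub> n \<in> A)"

lemma sat_mem:
  assumes "sat A" "x \<in> carrier G" "q x \<in> q ` A"
  shows "x \<in> A"
proof -
  obtain a where a: "a \<in> A" "q x = q a" using assms(3) by auto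
  have aG: "a \<in> carrier G" using a(1) assms(1) unfolding sat_def by auto
  define n where "n = inv\<^bsub>G\<^esub> a \<otimes>\<^bsub>G\<^esub> x"
  have nG: "n \<in> carrier G" using aG assms(2) n_def by simp
  have "q n = inv\<^bsub>Q\<^esub> (q a) \<otimes>\<^bsub>Q\<^esub> q x" using aG assms(2) n_def by simp
  also have "\<dots> = \<one>\<^bsub>Q\<^esub>" using a(2) aG qh.H.l_inv by simp
  finally have "n \<in> N" using nG N_mem by simp
  moreover have "x = a \<otimes>\<^bsub>G\<^esub> n" using aG assms(2) n_def by (simp add: G.m_assoc[symmetric])
  ultimately show ?thesis using a(1) assms(1) unfolding sat_def by auto
qed

lemma sat_eq: assumes "sat A" "sat B" "q ` A = q ` B" shows "A = B"
proof
  show "A \<subseteq> B"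
  proof
    fix x assume x: "x \<in> A"
    then have "x \<in> carrier G" using assms(1) unfolding sat_def by auto
    moreover have "q x \<in> q ` B" using x assms(3) by blast
    ultimately show "x \<in> B" using sat_mem[OF assms(2)] by blast
  qed
  show "B \<subseteq> A"
  proof
    fix x assume x: "x \<in> B"
    then have "x \<in> carrier G" using assms(2) unfolding sat_def by auto
    moreover have "q x \<in> q ` A" using x assms(3) by (metis image_eqI)
    ultimately show "x \<in> A" using sat_mem[OF assms(1)] by blast
  qed
qed

lemma sat_coset: "P \<in> PP \<Longrightarrow> N \<subseteq> P \<Longrightarrow> g \<in> carrier G \<Longrightarrow> sat (g <#\<^bsub>G\<^esub> P)"
  unfolding sat_def
proof (intro conjI ballI)
  assume P: "P \<in> PP" "N \<subseteq> P" "g \<in> carrier G"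
  have PG: "P \<subseteq> carrier G" using Psub[OF P(1)] subgroup.subset by blast
  show "g <#\<^bsub>G\<^esub> P \<subseteq> carrier G" using G.l_coset_subset_G[OF PG P(3)] .
  fix a n assume a: "a \<in> g <#\<^bsub>G\<^esub> P" and n: "n \<in> N"
  then obtain p where p: "p \<in> P" "a = g \<otimes>\<^bsub>G\<^esub> p" unfolding l_coset_def by auto
  have sP: "subgroup P G" using Psub[OF P(1)] by blast
  have "n \<in> P" using n P(2) by blast
  then have "p \<otimes>\<^bsub>G\<^esub> n \<in> P" using subgroup.m_closed[OF sP p(1)] by blast
  moreover have "a \<otimes>\<^bsub>G\<^esub> n = g \<otimes>\<^bsub>G\<^esub> (p \<otimes>\<^bsub>G\<^esub> n)"
  proof -
    have "p \<in> carrier G" "n \<in> carrier G" using p PG n N_carr by auto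
    then show ?thesis using p(2) P(3) by (simp add: G.m_assoc)
  qed
  ultimately show "a \<otimes>\<^bsub>G\<^esub> n \<in> g <#\<^bsub>G\<^esub> P" unfolding l_coset_def by auto
qed

lemma sat_P: "P \<in> PP \<Longrightarrow> N \<subseteq> P \<Longrightarrow> sat P"
proof -
  assume P: "P \<in> PP" "N \<subseteq> P"
  have PG: "P \<subseteq> carrier G" using Psub[OF P(1)] subgroup.subset by blast
  have "\<one>\<^bsub>G\<^esub> <#\<^bsub>G\<^esub> P = P" using G.lcos_mult_one[OF PG] .
  then show "sat P" using sat_coset[OF P G.one_closed] by simp
qed

lemma q_coset: "P \<in> PP \<Longrightarrow> g \<in> carrier G \<Longrightarrow> q ` (g <#\<^bsub>G\<^esub> P) = q g <#\<^bsub>Q\<^esub> (q ` P)"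
proof -
  assume P: "P \<in> PP" "g \<in> carrier G"
  have PG: "P \<subseteq> carrier G" using Psub[OF P(1)] subgroup.subset by blast
  have "g <#\<^bsub>G\<^esub> P = (\<lambda>h. g \<otimes>\<^bsub>G\<^esub> h) ` P" unfolding l_coset_def by auto
  then have "q ` (g <#\<^bsub>G\<^esub> P) = (\<lambda>h. q (g \<otimes>\<^bsub>G\<^esub> h)) ` P" by (simp add: image_image)
  also have "\<dots> = (\<lambda>h. q g \<otimes>\<^bsub>Q\<^esub> q h) ` P" using PG P(2) by (intro image_cong) (auto simp: subsetD)
  also have "\<dots> = q g <#\<^bsub>Q\<^esub> (q ` P)" unfolding l_coset_def by auto
  finally show ?thesis .
qed


definition Vx where "Vx = {(P, g <#\<^bsub>G\<^esub> P) | g P. g \<in> carrier G \<and> P \<in> PP}"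
definition PQ where "PQ = {q ` P | P. P \<in> PP \<and> N \<subseteq> P}"
definition PN where "PN = {P \<inter> N | P. P \<in> PP \<and> S - N \<subseteq> P}"
definition VQ where "VQ = {(K, y <#\<^bsub>Q\<^esub> K) | y K. y \<in> carrier Q \<and> K \<in> PQ}"
definition VN where "VN = {(K, n <#\<^bsub>G\<lparr>carrier := N\<rparr>\<^esub> K) | n K. n \<in> carrier (G\<lparr>carrier := N\<rparr>) \<and> K \<in> PN}"
definition Phi where "Phi v = (if N \<subseteq> fst v then Inl (q ` fst v, q ` snd v) else Inr (fst v \<inter> N, snd v \<inter> N))"

lemma PG: "P \<in> PP \<Longrightarrow> P \<subseteq> carrier G" using Psub subgroup.subset by blast
lemma sP: "P \<in> PP \<Longrightarrow> subgroup P G" using Psub by blast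

lemma lcosN: "n <#\<^bsub>G\<lparr>carrier := N\<rparr>\<^esub> K = n <#\<^bsub>G\<^esub> K" unfolding l_coset_def by simp

lemma P_sub:
  assumes P1: "P1 \<in> PP" "S - N \<subseteq> P1" and P2: "P2 \<in> PP" "S - N \<subseteq> P2" and I: "P1 \<inter> N \<subseteq> P2"
  shows "P1 \<subseteq> P2"
proof
  fix x assume x: "x \<in> P1"
  then have xG: "x \<in> carrier G" using PG[OF P1(1)] by blast
  obtain n h where nh: "n \<in> N" "h \<in> Hs" "x = n \<otimes>\<^bsub>G\<^esub> h" using decomp[OF xG] by blast
  have h1: "h \<in> P1" using Hs_le[OF P1] nh(2) by blast
  have h2: "h \<in> P2" using Hs_le[OF P2] nh(2) by blast
  have nG: "n \<in> carrier G" using nh(1) N_carr by blast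
  have hG: "h \<in> carrier G" using h1 PG[OF P1(1)] by blast
  have "x \<otimes>\<^bsub>G\<^esub> inv\<^bsub>G\<^esub> h = n" using nG hG nh(3) by (simp add: G.m_assoc)
  moreover have "x \<otimes>\<^bsub>G\<^esub> inv\<^bsub>G\<^esub> h \<in> P1"
    using subgroup.m_closed[OF sP[OF P1(1)] x subgroup.m_inv_closed[OF sP[OF P1(1)] h1]] .
  ultimately have "n \<in> P2" using I nh(1) by auto
  then show "x \<in> P2" using nh(3) subgroup.m_closed[OF sP[OF P2(1)] _ h2] by simp
qed

lemma coset_repr:
  assumes "P \<in> PP" "c \<in> carrier G" "x \<in> c <#\<^bsub>G\<^esub> P"
  shows "c <#\<^bsub>G\<^esub> P = x <#\<^bsub>G\<^esub> P"
  using G.l_repr_independence[OF assms(3,2) sP[OF assms(1)]] .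

lemma coset_N:
  assumes P: "P \<in> PP" "S - N \<subseteq> P" and g: "g \<in> carrier G"
  obtains n where "n \<in> N" "g <#\<^bsub>G\<^esub> P = n <#\<^bsub>G\<^esub> P"
proof -
  obtain n h where nh: "n \<in> N" "h \<in> Hs" "g = n \<otimes>\<^bsub>G\<^esub> h" using decomp[OF g] by blast
  have h1: "h \<in> P" using Hs_le[OF P] nh(2) by blast
  have nG: "n \<in> carrier G" using nh(1) N_carr by blast
  have hG: "h \<in> carrier G" using h1 PG[OF P(1)] by blast
  have "g \<otimes>\<^bsub>G\<^esub> inv\<^bsub>G\<^esub> h = n" using nG hG nh(3) by (simp add: G.m_assoc)
  moreover have "inv\<^bsub>G\<^esub> h \<in> P" using subgroup.m_inv_closed[OF sP[OF P(1)] h1] .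
  ultimately have "n \<in> g <#\<^bsub>G\<^esub> P" unfolding l_coset_def by force
  then show ?thesis using that nh(1) coset_repr[OF P(1) g] by blast
qed

lemma coset_int:
  assumes P: "P \<in> PP" and n: "n \<in> N"
  shows "(n <#\<^bsub>G\<^esub> P) \<inter> N = n <#\<^bsub>G\<^esub> (P \<inter> N)"
proof
  have nG: "n \<in> carrier G" using n N_carr by blast
  show "(n <#\<^bsub>G\<^esub> P) \<inter> N \<subseteq> n <#\<^bsub>G\<^esub> (P \<inter> N)"
  proof
    fix x assume x: "x \<in> (n <#\<^bsub>G\<^esub> P) \<inter> N"
    then obtain p where p: "p \<in> P" "x = n \<otimes>\<^bsub>G\<^esub> p" unfolding l_coset_def by auto
    have pG: "p \<in> carrier G" using p(1) PG[OF P] by blast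
    have "inv\<^bsub>G\<^esub> n \<otimes>\<^bsub>G\<^esub> x = p" using p(2) nG pG by (simp add: G.m_assoc[symmetric])
    moreover have "inv\<^bsub>G\<^esub> n \<otimes>\<^bsub>G\<^esub> x \<in> N"
      using subgroup.m_closed[OF N_sub subgroup.m_inv_closed[OF N_sub n]] x by blast
    ultimately have "p \<in> P \<inter> N" using p(1) by simp
    then show "x \<in> n <#\<^bsub>G\<^esub> (P \<inter> N)" using p(2) unfolding l_coset_def by blast
  qed
  show "n <#\<^bsub>G\<^esub> (P \<inter> N) \<subseteq> (n <#\<^bsub>G\<^esub> P) \<inter> N"
  proof
    fix x assume "x \<in> n <#\<^bsub>G\<^esub> (P \<inter> N)"
    then obtain p where p: "p \<in> P" "p \<in> N" "x = n \<otimes>\<^bsub>G\<^esub> p" unfolding l_coset_def by auto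
    have "x \<in> N" using subgroup.m_closed[OF N_sub n p(2)] p(3) by simp
    moreover have "x \<in> n <#\<^bsub>G\<^esub> P" using p unfolding l_coset_def by blast
    ultimately show "x \<in> (n <#\<^bsub>G\<^esub> P) \<inter> N" by blast
  qed
qed


lemma self_in_coset: "P \<in> PP \<Longrightarrow> x \<in> carrier G \<Longrightarrow> x \<in> x <#\<^bsub>G\<^esub> P"
proof -
  assume P: "P \<in> PP" and x: "x \<in> carrier G"
  have "\<one>\<^bsub>G\<^esub> \<in> P" using subgroup.one_closed[OF sP[OF P]] .
  moreover have "x = x \<otimes>\<^bsub>G\<^esub> \<one>\<^bsub>G\<^esub>" using x by simp
  ultimately show "x \<in> x <#\<^bsub>G\<^esub> P" unfolding l_coset_def by blast
qed

lemma VxE: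
  assumes "v \<in> Vx"
  obtains g P where "g \<in> carrier G" "P \<in> PP" "v = (P, g <#\<^bsub>G\<^esub> P)"
  using assms unfolding Vx_def by blast

lemma inj_Phi: "inj_on Phi Vx"
proof (rule inj_onI)
  fix v w assume v: "v \<in> Vx" and w: "w \<in> Vx" and e: "Phi v = Phi w"
  obtain g1 P1 where 1: "g1 \<in> carrier G" "P1 \<in> PP" "v = (P1, g1 <#\<^bsub>G\<^esub> P1)" using VxE[OF v] by blast
  obtain g2 P2 where 2: "g2 \<in> carrier G" "P2 \<in> PP" "w = (P2, g2 <#\<^bsub>G\<^esub> P2)" using VxE[OF w] by blast
  show "v = w"
  proof (cases "N \<subseteq> P1")
    case True
    have T2: "N \<subseteq> P2"
    proof (rule ccontr)
      assume "\<not> N \<subseteq> P2"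
      then show False using e True 1(3) 2(3) unfolding Phi_def by simp
    qed
    have eq1: "q ` P1 = q ` P2" and eq2: "q ` (g1 <#\<^bsub>G\<^esub> P1) = q ` (g2 <#\<^bsub>G\<^esub> P2)"
      using e True T2 1(3) 2(3) unfolding Phi_def by simp_all
    have "P1 = P2" using sat_eq[OF sat_P[OF 1(2) True] sat_P[OF 2(2) T2] eq1] .
    moreover have "g1 <#\<^bsub>G\<^esub> P1 = g2 <#\<^bsub>G\<^esub> P2"
      using sat_eq[OF sat_coset[OF 1(2) True 1(1)] sat_coset[OF 2(2) T2 2(1)] eq2] .
    ultimately show ?thesis using 1(3) 2(3) by simp
  next
    case False
    have F2: "\<not> N \<subseteq> P2"
    proof
      assume "N \<subseteq> P2"
      then show False using e False 1(3) 2(3) unfolding Phi_def by simp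
    qed
    have eq1: "P1 \<inter> N = P2 \<inter> N" and eq2: "(g1 <#\<^bsub>G\<^esub> P1) \<inter> N = (g2 <#\<^bsub>G\<^esub> P2) \<inter> N"
      using e False F2 1(3) 2(3) unfolding Phi_def by simp_all
    have S1: "S - N \<subseteq> P1" using Pdich[OF 1(2)] False by blast
    have S2: "S - N \<subseteq> P2" using Pdich[OF 2(2)] F2 by blast
    have PP: "P1 = P2"
      using P_sub[OF 1(2) S1 2(2) S2] P_sub[OF 2(2) S2 1(2) S1] eq1 by blast
    obtain n where n: "n \<in> N" "g1 <#\<^bsub>G\<^esub> P1 = n <#\<^bsub>G\<^esub> P1" using coset_N[OF 1(2) S1 1(1)] by blast
    have nG: "n \<in> carrier G" using n(1) N_carr by blast
    have "n \<in> (g1 <#\<^bsub>G\<^esub> P1) \<inter> N" using n self_in_coset[OF 1(2) nG] by simp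
    then have "n \<in> g2 <#\<^bsub>G\<^esub> P2" using eq2 by blast
    then have "g2 <#\<^bsub>G\<^esub> P2 = n <#\<^bsub>G\<^esub> P2" using coset_repr[OF 2(2) 2(1)] by blast
    then have "g1 <#\<^bsub>G\<^esub> P1 = g2 <#\<^bsub>G\<^esub> P2" using n(2) PP by simp
    then show ?thesis using 1(3) 2(3) PP by simp
  qed
qed

lemma Phi_Q:
  assumes "v \<in> Vx" "N \<subseteq> fst v"
  shows "Phi v = Inl (q ` fst v, q ` snd v)" "(q ` fst v, q ` snd v) \<in> VQ"
proof -
  show "Phi v = Inl (q ` fst v, q ` snd v)" using assms(2) unfolding Phi_def by simp
  obtain g P where gP: "g \<in> carrier G" "P \<in> PP" "v = (P, g <#\<^bsub>G\<^esub> P)" using VxE[OF assms(1)] by blast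
  have "q ` snd v = q g <#\<^bsub>Q\<^esub> (q ` fst v)" using q_coset[OF gP(2,1)] gP(3) by simp
  moreover have "q g \<in> carrier Q" using gP(1) by simp
  moreover have "q ` fst v \<in> PQ" unfolding PQ_def using gP assms(2) by auto
  ultimately show "(q ` fst v, q ` snd v) \<in> VQ" unfolding VQ_def by blast
qed

lemma Phi_N:
  assumes "v \<in> Vx" "\<not> N \<subseteq> fst v"
  shows "Phi v = Inr (fst v \<inter> N, snd v \<inter> N)" "(fst v \<inter> N, snd v \<inter> N) \<in> VN"
proof -
  show "Phi v = Inr (fst v \<inter> N, snd v \<inter> N)" using assms(2) unfolding Phi_def by simp
  obtain g P where gP: "g \<in> carrier G" "P \<in> PP" "v = (P, g <#\<^bsub>G\<^esub> P)" using VxE[OF assms(1)] by blast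
  have S1: "S - N \<subseteq> P" using Pdich[OF gP(2)] assms(2) gP(3) by auto
  obtain n where n: "n \<in> N" "g <#\<^bsub>G\<^esub> P = n <#\<^bsub>G\<^esub> P" using coset_N[OF gP(2) S1 gP(1)] by blast
  have "snd v \<inter> N = n <#\<^bsub>G\<lparr>carrier := N\<rparr>\<^esub> (fst v \<inter> N)"
    using coset_int[OF gP(2) n(1)] n(2) gP(3) by (simp add: lcosN)
  moreover have "fst v \<inter> N \<in> PN" unfolding PN_def using gP S1 by auto
  ultimately show "(fst v \<inter> N, snd v \<inter> N) \<in> VN" unfolding VN_def using n(1) by auto
qed

lemma surjQ:
  assumes "a \<in> VQ" shows "\<exists>v\<in>Vx. Phi v = Inl a"
proof -
  obtain y K where yK: "y \<in> carrier Q" "K \<in> PQ" "a = (K, y <#\<^bsub>Q\<^esub> K)" using assms unfolding VQ_def by blast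
  obtain P where P: "P \<in> PP" "N \<subseteq> P" "K = q ` P" using yK(2) unfolding PQ_def by blast
  obtain g where g: "g \<in> carrier G" "y = q g" using yK(1) surj by (metis imageE)
  let ?v = "(P, g <#\<^bsub>G\<^esub> P)"
  have v: "?v \<in> Vx" unfolding Vx_def using g P by blast
  have "Phi ?v = Inl (q ` P, q ` (g <#\<^bsub>G\<^esub> P))" using P(2) unfolding Phi_def by simp
  also have "\<dots> = Inl a" using q_coset[OF P(1) g(1)] yK(3) P(3) g(2) by simp
  finally show ?thesis using v by blast
qed

lemma surjN:
  assumes "b \<in> VN" shows "\<exists>v\<in>Vx. Phi v = Inr b"
proof -
  obtain n K where nK: "n \<in> N" "K \<in> PN" "b = (K, n <#\<^bsub>G\<lparr>carrier := N\<rparr>\<^esub> K)" using assms unfolding VN_def by auto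
  obtain P where P: "P \<in> PP" "S - N \<subseteq> P" "K = P \<inter> N" using nK(2) unfolding PN_def by blast
  have nG: "n \<in> carrier G" using nK(1) N_carr by blast
  let ?v = "(P, n <#\<^bsub>G\<^esub> P)"
  have v: "?v \<in> Vx" unfolding Vx_def using nG P by blast
  have "Phi ?v = Inr (P \<inter> N, (n <#\<^bsub>G\<^esub> P) \<inter> N)" using notN[OF P(1,2)] unfolding Phi_def by simp
  also have "\<dots> = Inr b" using coset_int[OF P(1) nK(1)] nK(3) P(3) by (simp add: lcosN)
  finally show ?thesis using v by blast
qed


lemma KG_eq: "coset_complex G PP = {\<sigma>. finite \<sigma> \<and> \<sigma> \<noteq> {} \<and> \<sigma> \<subseteq> Vx \<and> \<Inter> (snd ` \<sigma>) \<noteq> {}}"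
  unfolding coset_complex_def Vx_def by (rule refl)
lemma KQ_eq: "coset_complex Q PQ = {\<sigma>. finite \<sigma> \<and> \<sigma> \<noteq> {} \<and> \<sigma> \<subseteq> VQ \<and> \<Inter> (snd ` \<sigma>) \<noteq> {}}"
  unfolding coset_complex_def VQ_def by (rule refl)
lemma KN_eq: "coset_complex (G\<lparr>carrier := N\<rparr>) PN = {\<sigma>. finite \<sigma> \<and> \<sigma> \<noteq> {} \<and> \<sigma> \<subseteq> VN \<and> \<Inter> (snd ` \<sigma>) \<noteq> {}}"
  unfolding coset_complex_def VN_def by (rule refl)

lemma Vx_carr: "v \<in> Vx \<Longrightarrow> snd v \<subseteq> carrier G"
proof -
  assume "v \<in> Vx"
  then obtain g P where gP: "g \<in> carrier G" "P \<in> PP" "v = (P, g <#\<^bsub>G\<^esub> P)" by (rule VxE)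
  show "snd v \<subseteq> carrier G" using G.l_coset_subset_G[OF PG[OF gP(2)] gP(1)] gP(3) by simp
qed

lemma forward:
  assumes "\<sigma> \<in> coset_complex G PP"
  shows "Phi ` \<sigma> \<in> simplicial_join (coset_complex Q PQ) (coset_complex (G\<lparr>carrier := N\<rparr>) PN)"
proof -
  have fin: "finite \<sigma>" and ne: "\<sigma> \<noteq> {}" and sub: "\<sigma> \<subseteq> Vx" and int: "\<Inter> (snd ` \<sigma>) \<noteq> {}"
    using assms unfolding KG_eq by auto
  obtain x where x: "x \<in> \<Inter> (snd ` \<sigma>)" using int by blast
  obtain v0 where v0: "v0 \<in> \<sigma>" using ne by blast
  have xG: "x \<in> carrier G" using x v0 Vx_carr[of v0] sub by blast
  obtain m h where mh: "m \<in> N" "h \<in> Hs" "x = m \<otimes>\<^bsub>G\<^esub> h" using decomp[OF xG] by blast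
  have finI: "finite (Phi ` \<sigma>)" using fin by simp
  have A: "Inl -` Phi ` \<sigma> \<in> insert {} (coset_complex Q PQ)"
  proof (cases "Inl -` Phi ` \<sigma> = {}")
    case False
    have "finite (Inl -` Phi ` \<sigma>)" using finI by (rule finite_vimageI) simp
    moreover have "Inl -` Phi ` \<sigma> \<subseteq> VQ"
    proof
      fix a assume "a \<in> Inl -` Phi ` \<sigma>"
      then obtain v where v: "v \<in> \<sigma>" "Inl a = Phi v" by auto
      have NP: "N \<subseteq> fst v" using v(2) unfolding Phi_def by (auto split: if_splits)
      have "a = (q ` fst v, q ` snd v)" using v(2) Phi_Q(1)[OF _ NP] v(1) sub by auto
      then show "a \<in> VQ" using Phi_Q(2)[OF _ NP] v(1) sub by auto
    qed
    moreover have "q x \<in> \<Inter> (snd ` (Inl -` Phi ` \<sigma>))"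
    proof (rule InterI)
      fix c assume "c \<in> snd ` (Inl -` Phi ` \<sigma>)"
      then obtain a v where v: "v \<in> \<sigma>" "Inl a = Phi v" "c = snd a" by auto
      have NP: "N \<subseteq> fst v" using v(2) unfolding Phi_def by (auto split: if_splits)
      have "a = (q ` fst v, q ` snd v)" using v(2) Phi_Q(1)[OF _ NP] v(1) sub by auto
      moreover have "x \<in> snd v" using x v(1) by blast
      ultimately show "q x \<in> c" using v(3) by auto
    qed
    ultimately show ?thesis using False unfolding KQ_eq by blast
  qed simp
  have B: "Inr -` Phi ` \<sigma> \<in> insert {} (coset_complex (G\<lparr>carrier := N\<rparr>) PN)"
  proof (cases "Inr -` Phi ` \<sigma> = {}")
    case False
    have "finite (Inr -` Phi ` \<sigma>)" using finI by (rule finite_vimageI) simp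
    moreover have "Inr -` Phi ` \<sigma> \<subseteq> VN"
    proof
      fix a assume "a \<in> Inr -` Phi ` \<sigma>"
      then obtain v where v: "v \<in> \<sigma>" "Inr a = Phi v" by auto
      have NP: "\<not> N \<subseteq> fst v" using v(2) unfolding Phi_def by (auto split: if_splits)
      have "a = (fst v \<inter> N, snd v \<inter> N)" using v(2) Phi_N(1)[OF _ NP] v(1) sub by auto
      then show "a \<in> VN" using Phi_N(2)[OF _ NP] v(1) sub by auto
    qed
    moreover have "m \<in> \<Inter> (snd ` (Inr -` Phi ` \<sigma>))"
    proof (rule InterI)
      fix c assume "c \<in> snd ` (Inr -` Phi ` \<sigma>)"
      then obtain a v where v: "v \<in> \<sigma>" "Inr a = Phi v" "c = snd a" by auto
      have NP: "\<not> N \<subseteq> fst v" using v(2) unfolding Phi_def by (auto split: if_splits)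
      have av: "a = (fst v \<inter> N, snd v \<inter> N)" using v(2) Phi_N(1)[OF _ NP] v(1) sub by auto
      obtain g P where gP: "g \<in> carrier G" "P \<in> PP" "v = (P, g <#\<^bsub>G\<^esub> P)" using VxE[of v] v(1) sub by blast
      have S1: "S - N \<subseteq> P" using Pdich[OF gP(2)] NP gP(3) by auto
      have xin: "x \<in> g <#\<^bsub>G\<^esub> P" using x v(1) gP(3) by force
      have ceq: "g <#\<^bsub>G\<^esub> P = x <#\<^bsub>G\<^esub> P" using coset_repr[OF gP(2,1) xin] .
      have hP: "h \<in> P" using Hs_le[OF gP(2) S1] mh(2) by blast
      have mG: "m \<in> carrier G" using mh(1) N_carr by blast
      have hG: "h \<in> carrier G" using hP PG[OF gP(2)] by blast
      have "x \<otimes>\<^bsub>G\<^esub> inv\<^bsub>G\<^esub> h = m" using mG hG mh(3) by (simp add: G.m_assoc)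
      moreover have "inv\<^bsub>G\<^esub> h \<in> P" using subgroup.m_inv_closed[OF sP[OF gP(2)] hP] .
      ultimately have "m \<in> x <#\<^bsub>G\<^esub> P" unfolding l_coset_def by force
      then show "m \<in> c" using ceq av v(3) gP(3) mh(1) by simp
    qed
    ultimately show ?thesis using False unfolding KN_eq by blast
  qed simp
  show ?thesis unfolding simplicial_join_def using A B ne by blast
qed


lemma backward:
  assumes "\<tau> \<in> simplicial_join (coset_complex Q PQ) (coset_complex (G\<lparr>carrier := N\<rparr>) PN)"
  shows "\<tau> \<in> (`) Phi ` coset_complex G PP"
proof -
  have tne: "\<tau> \<noteq> {}" and A: "Inl -` \<tau> \<in> insert {} (coset_complex Q PQ)"
    and B: "Inr -` \<tau> \<in> insert {} (coset_complex (G\<lparr>carrier := N\<rparr>) PN)"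
    using assms unfolding simplicial_join_def by auto
  have Afin: "finite (Inl -` \<tau>)" and AV: "Inl -` \<tau> \<subseteq> VQ" using A unfolding KQ_eq by auto
  have Bfin: "finite (Inr -` \<tau>)" and BV: "Inr -` \<tau> \<subseteq> VN" using B unfolding KN_eq by auto
  define \<sigma> where "\<sigma> = {v \<in> Vx. Phi v \<in> \<tau>}"
  have sub: "\<sigma> \<subseteq> Vx" unfolding \<sigma>_def by auto
  have img: "Phi ` \<sigma> = \<tau>"
  proof
    show "Phi ` \<sigma> \<subseteq> \<tau>" unfolding \<sigma>_def by auto
    show "\<tau> \<subseteq> Phi ` \<sigma>"
    proof
      fix t assume t: "t \<in> \<tau>"
      show "t \<in> Phi ` \<sigma>"
      proof (cases t)
        case (Inl a)
        then have "a \<in> VQ" using t AV by auto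
        then obtain v where "v \<in> Vx" "Phi v = Inl a" using surjQ by blast
        then show ?thesis using Inl t unfolding \<sigma>_def by force
      next
        case (Inr b)
        then have "b \<in> VN" using t BV by auto
        then obtain v where "v \<in> Vx" "Phi v = Inr b" using surjN by blast
        then show ?thesis using Inr t unfolding \<sigma>_def by force
      qed
    qed
  qed
  have tsub: "\<tau> \<subseteq> Inl ` (Inl -` \<tau>) \<union> Inr ` (Inr -` \<tau>)"
  proof
    fix t assume "t \<in> \<tau>" then show "t \<in> Inl ` (Inl -` \<tau>) \<union> Inr ` (Inr -` \<tau>)" by (cases t) auto
  qed
  have tfin: "finite \<tau>" using finite_subset[OF tsub] Afin Bfin by blast
  have sfin: "finite \<sigma>" using finite_imageD[of Phi \<sigma>] img tfin inj_on_subset[OF inj_Phi sub] by simp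
  have sne: "\<sigma> \<noteq> {}" using img tne by auto
  obtain y0 where y0: "Inl -` \<tau> \<noteq> {} \<Longrightarrow> y0 \<in> \<Inter> (snd ` (Inl -` \<tau>))"
    using A unfolding KQ_eq by blast
  obtain m0 where m0: "Inr -` \<tau> \<noteq> {} \<Longrightarrow> m0 \<in> \<Inter> (snd ` (Inr -` \<tau>))"
    using B unfolding KN_eq by blast
  obtain x0 where x0: "x0 \<in> carrier G" "Inl -` \<tau> \<noteq> {} \<Longrightarrow> q x0 = y0"
  proof (cases "Inl -` \<tau> = {}")
    case True then show ?thesis using that[of "\<one>\<^bsub>G\<^esub>"] by simp
  next
    case False
    then obtain a where a: "a \<in> Inl -` \<tau>" by blast
    then have "a \<in> VQ" using AV by blast
    then obtain y K where yK: "y \<in> carrier Q" "K \<in> PQ" "a = (K, y <#\<^bsub>Q\<^esub> K)" unfolding VQ_def by blast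
    obtain P where P: "P \<in> PP" "N \<subseteq> P" "K = q ` P" using yK(2) unfolding PQ_def by blast
    obtain g where g: "g \<in> carrier G" "y = q g" using yK(1) surj by (metis imageE)
    have "y0 \<in> snd a" using y0 False a by blast
    then have "y0 \<in> q ` (g <#\<^bsub>G\<^esub> P)" using q_coset[OF P(1) g(1)] yK(3) P(3) g(2) by simp
    then obtain x where x: "x \<in> g <#\<^bsub>G\<^esub> P" "y0 = q x" by blast
    have "x \<in> carrier G" using x(1) G.l_coset_subset_G[OF PG[OF P(1)] g(1)] by blast
    then show ?thesis using that x(2) by simp
  qed
  have m0N: "Inr -` \<tau> \<noteq> {} \<Longrightarrow> m0 \<in> N"
  proof -
    assume ne: "Inr -` \<tau> \<noteq> {}"
    then obtain b where b: "b \<in> Inr -` \<tau>" by blast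
    then have "b \<in> VN" using BV by blast
    then obtain n K where nK: "n \<in> N" "K \<in> PN" "b = (K, n <#\<^bsub>G\<lparr>carrier := N\<rparr>\<^esub> K)" unfolding VN_def by auto
    obtain P where P: "P \<in> PP" "K = P \<inter> N" using nK(2) unfolding PN_def by blast
    have "m0 \<in> snd b" using m0 ne b by blast
    then have "m0 \<in> n <#\<^bsub>G\<^esub> (P \<inter> N)" using nK(3) P(2) by (simp add: lcosN)
    then show "m0 \<in> N" using coset_int[OF P(1) nK(1)] by blast
  qed
  define m1 where "m1 = (if Inr -` \<tau> = {} then \<one>\<^bsub>G\<^esub> else m0)"
  have m1N: "m1 \<in> N" unfolding m1_def using m0N subgroup.one_closed[OF N_sub] by auto
  have m1G: "m1 \<in> carrier G" using m1N N_carr by blast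
  obtain n' h' where nh: "n' \<in> N" "h' \<in> Hs" "x0 = n' \<otimes>\<^bsub>G\<^esub> h'" using decomp[OF x0(1)] by blast
  have n'G: "n' \<in> carrier G" using nh(1) N_carr by blast
  have h'G: "h' \<in> carrier G" using nh(2) subgroup.subset[OF Hs_sub] by blast
  define z where "z = m1 \<otimes>\<^bsub>G\<^esub> h'"
  have zG: "z \<in> carrier G" unfolding z_def using m1G h'G by simp
  have qm1: "q m1 = \<one>\<^bsub>Q\<^esub>" using m1N N_mem by blast
  have qn': "q n' = \<one>\<^bsub>Q\<^esub>" using nh(1) N_mem by blast
  have qz: "q z = q x0" unfolding z_def using nh(3) m1G h'G n'G qm1 qn' by simp
  have "z \<in> \<Inter> (snd ` \<sigma>)"
  proof (rule InterI)
    fix c assume "c \<in> snd ` \<sigma>"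
    then obtain v where v: "v \<in> \<sigma>" "c = snd v" by blast
    have vV: "v \<in> Vx" and vt: "Phi v \<in> \<tau>" using v(1) unfolding \<sigma>_def by auto
    obtain g P where gP: "g \<in> carrier G" "P \<in> PP" "v = (P, g <#\<^bsub>G\<^esub> P)" using VxE[OF vV] by blast
    show "z \<in> c"
    proof (cases "N \<subseteq> P")
      case True
      have "Phi v = Inl (q ` P, q ` (g <#\<^bsub>G\<^esub> P))" using True gP(3) unfolding Phi_def by simp
      then have a: "(q ` P, q ` (g <#\<^bsub>G\<^esub> P)) \<in> Inl -` \<tau>" using vt by simp
      then have "y0 \<in> q ` (g <#\<^bsub>G\<^esub> P)" using y0 by fastforce
      moreover have "q x0 = y0" using x0(2) a by blast
      ultimately have "q z \<in> q ` (g <#\<^bsub>G\<^esub> P)" using qz by simp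
      then have "z \<in> g <#\<^bsub>G\<^esub> P" using sat_mem[OF sat_coset[OF gP(2) True gP(1)] zG] by blast
      then show ?thesis using v(2) gP(3) by simp
    next
      case False
      have S1: "S - N \<subseteq> P" using Pdich[OF gP(2)] False by blast
      have "Phi v = Inr (P \<inter> N, (g <#\<^bsub>G\<^esub> P) \<inter> N)" using False gP(3) unfolding Phi_def by simp
      then have b: "(P \<inter> N, (g <#\<^bsub>G\<^esub> P) \<inter> N) \<in> Inr -` \<tau>" using vt by simp
      then have ne: "Inr -` \<tau> \<noteq> {}" by blast
      have "m0 \<in> (g <#\<^bsub>G\<^esub> P) \<inter> N" using m0[OF ne] b by fastforce
      then have m1in: "m1 \<in> g <#\<^bsub>G\<^esub> P" using ne unfolding m1_def by simp
      have ceq: "g <#\<^bsub>G\<^esub> P = m1 <#\<^bsub>G\<^esub> P" using coset_repr[OF gP(2,1) m1in] .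
      have "h' \<in> P" using Hs_le[OF gP(2) S1] nh(2) by blast
      then have "z \<in> m1 <#\<^bsub>G\<^esub> P" unfolding z_def l_coset_def by blast
      then show ?thesis using ceq v(2) gP(3) by simp
    qed
  qed
  then have "\<sigma> \<in> coset_complex G PP" unfolding KG_eq using sfin sne sub by blast
  then show ?thesis using img by blast
qed

lemma dclosed_KG: "\<forall>\<sigma>\<in>coset_complex G PP. \<forall>\<tau>. \<tau> \<subseteq> \<sigma> \<and> \<tau> \<noteq> {} \<longrightarrow> \<tau> \<in> coset_complex G PP"
proof (intro ballI allI impI)
  fix \<sigma> \<tau> assume s: "\<sigma> \<in> coset_complex G PP" and t: "\<tau> \<subseteq> \<sigma> \<and> \<tau> \<noteq> {}"
  have "finite \<sigma>" "\<sigma> \<subseteq> Vx" "\<Inter> (snd ` \<sigma>) \<noteq> {}" using s unfolding KG_eq by auto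
  moreover have "\<Inter> (snd ` \<sigma>) \<subseteq> \<Inter> (snd ` \<tau>)" using t by blast
  ultimately have "finite \<tau>" "\<tau> \<subseteq> Vx" "\<Inter> (snd ` \<tau>) \<noteq> {}" using t finite_subset[of \<tau> \<sigma>] by auto
  then show "\<tau> \<in> coset_complex G PP" using t unfolding KG_eq by simp
qed

lemma UKG: "\<Union> (coset_complex G PP) \<subseteq> Vx" unfolding KG_eq by auto

lemma image_KG: "(`) Phi ` coset_complex G PP = simplicial_join (coset_complex Q PQ) (coset_complex (G\<lparr>carrier := N\<rparr>) PN)"
proof
  show "(`) Phi ` coset_complex G PP \<subseteq> simplicial_join (coset_complex Q PQ) (coset_complex (G\<lparr>carrier := N\<rparr>) PN)"
  proof
    fix t assume "t \<in> (`) Phi ` coset_complex G PP"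
    then obtain \<sigma> where "\<sigma> \<in> coset_complex G PP" "t = Phi ` \<sigma>" by blast
    then show "t \<in> simplicial_join (coset_complex Q PQ) (coset_complex (G\<lparr>carrier := N\<rparr>) PN)"
      using forward by simp
  qed
  show "simplicial_join (coset_complex Q PQ) (coset_complex (G\<lparr>carrier := N\<rparr>) PN) \<subseteq> (`) Phi ` coset_complex G PP"
    using backward by (rule subsetI)
qed

end

theorem corollary3p20:
  fixes G :: "('a, 'm) monoid_scheme" and Q :: "('b, 'n) monoid_scheme"
    and q :: "'a \<Rightarrow> 'b" and N S :: "'a set" and \<P> :: "'a set set"
  assumes "group G" and "group Q"
    and "q \<in> epi G Q"
    and "N = kernel G Q q"
    and "S \<subseteq> carrier G" and "generate G S = carrier G"
    and "\<And>P. P \<in> \<P> \<Longrightarrow> subgroup P G \<and> P \<noteq> carrier G"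
    and "\<And>P. P \<in> \<P> \<Longrightarrow> N \<subseteq> P \<or> S - N \<subseteq> P"
  shows "geom_realisation (coset_complex G \<P>) homotopy_equivalent_space
         geom_realisation (simplicial_join
            (coset_complex Q {q ` P | P. P \<in> \<P> \<and> N \<subseteq> P})
            (coset_complex (G\<lparr>carrier := N\<rparr>) {P \<inter> N | P. P \<in> \<P> \<and> S - N \<subseteq> P}))"
proof -
  interpret c: cc_setup G Q q N S \<P>
    by (rule cc_setup.intro) (use assms in auto)
  have d: "dclosed (coset_complex G \<P>)" unfolding dclosed_def by (rule c.dclosed_KG)
  have i: "inj_on c.Phi (\<Union> (coset_complex G \<P>))" by (rule inj_on_subset[OF c.inj_Phi c.UKG])
  have h: "geom_realisation (coset_complex G \<P>) homeomorphic_space geom_realisation ((`) c.Phi ` coset_complex G \<P>)"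
    by (rule simplicial_iso[OF d i])
  have e: "(`) c.Phi ` coset_complex G \<P> = simplicial_join
            (coset_complex Q {q ` P | P. P \<in> \<P> \<and> N \<subseteq> P})
            (coset_complex (G\<lparr>carrier := N\<rparr>) {P \<inter> N | P. P \<in> \<P> \<and> S - N \<subseteq> P})"
    using c.image_KG unfolding c.PQ_def c.PN_def .
  show ?thesis using homeomorphic_imp_homotopy_equivalent_space[OF h] unfolding e .
qed

end
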